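(* Let $X$ be a real Hilbert space, let $\rho>-1$, and let $A\colon X\rightrightarrows X$ be $\rho$-comonotone. Then $$\operatorname{gra} A=\{(J_A x,\,(\mathrm{Id}-J_A)x) : x\in \operatorname{ran}(\mathrm{Id}+A)\}.$$ Moreover, $A$ is maximally $\rho$-comonotone if and only if $\operatorname{ran}(\mathrm{Id}+A)=X$, in which case $$\operatorname{gra} A=\{(J_A x,\,(\mathrm{Id}-J_A)x) : x\in X\}.$$
   Context: $X$ is a real Hilbert space with inner product $\langle\cdot,\cdot\rangle$ and norm $\|\cdot\|$; $\mathrm{Id}$ is the identity on $X$. For a set-valued operator $A\colon X\rightrightarrows X$, $\operatorname{gra}A=\{(x,u): u\in Ax\}$, $A^{-1}$ is the operator with $\operatorname{gra}A^{-1}=\{(u,x):(x,u)\in\operatorname{gra}A\}$, and the resolvent is $J_A=(\mathrm{Id}+A)^{-1}$ (whose domain is $\operatorname{ran}(\mathrm{Id}+A)$). For $\rho\in\mathbb R$, $A$ is $\rho$-comonotone if $\langle x-y,u-v\rangle\ge\rho\|u-v\|^2$ for all $(x,u),(y,v)\in\operatorname{gra}A$; it is maximally $\rho$-comonotone if it is $\rho$-comonotone and no $\rho$-comonotone operator has a graph properly containing $\operatorname{gra}A$. *)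

theory Defs
  imports "HOL-Analysis.Analysis"
begin

definition gra :: "('a \<Rightarrow> 'a set) \<Rightarrow> ('a \<times> 'a) set" where
  "gra A = {(x, u). u \<in> A x}"

definition ran_Id_plus :: "('a::real_vector \<Rightarrow> 'a set) \<Rightarrow> 'a set" where
  "ran_Id_plus A = {x + u | x u. u \<in> A x}"

text \<open>Resolvent J_A = (Id + A)^{-1}, used as a point-valued map on ran (Id + A):
  J_A x is the (unique, under comonotonicity with rho > -1) p with x in p + A p.\<close>
definition resolvent :: "('a::real_vector \<Rightarrow> 'a set) \<Rightarrow> 'a \<Rightarrow> 'a" where
  "resolvent A x = (THE p. x - p \<in> A p)"

definition comonotone :: "real \<Rightarrow> ('a::real_inner \<Rightarrow> 'a set) \<Rightarrow> bool" where
  "comonotone \<rho> A \<longleftrightarrow>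
     (\<forall>x u y v. u \<in> A x \<longrightarrow> v \<in> A y \<longrightarrow> inner (x - y) (u - v) \<ge> \<rho> * (norm (u - v))\<^sup>2)"

definition max_comonotone :: "real \<Rightarrow> ('a::real_inner \<Rightarrow> 'a set) \<Rightarrow> bool" where
  "max_comonotone \<rho> A \<longleftrightarrow> comonotone \<rho> A \<and>
     (\<forall>B. comonotone \<rho> B \<longrightarrow> gra A \<subseteq> gra B \<longrightarrow> gra B = gra A)"

end

theory Submission
  imports Defs
begin


lemma norm_diff_sq: "(norm (b - a))\<^sup>2 = (norm b)\<^sup>2 - 2 * inner b a + (norm (a::'a::real_inner))\<^sup>2"
  by (simp add: power2_norm_eq_inner inner_diff inner_commute)

lemma wsum_sq:
  fixes a :: "'b \<Rightarrow> 'a::real_inner"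
  assumes "sum l S = 1"
  shows "(\<Sum>k\<in>S. l k * (norm (b - a k))\<^sup>2) = (norm b)\<^sup>2 - 2 * inner b (\<Sum>k\<in>S. l k *\<^sub>R a k) + (\<Sum>k\<in>S. l k * (norm (a k))\<^sup>2)"
proof -
  have "(\<Sum>k\<in>S. l k * (norm (b - a k))\<^sup>2) = (\<Sum>k\<in>S. l k * (norm b)\<^sup>2 - 2 * (l k * inner b (a k)) + l k * (norm (a k))\<^sup>2)"
    by (rule sum.cong) (auto simp: norm_diff_sq algebra_simps)
  also have "\<dots> = (\<Sum>k\<in>S. l k) * (norm b)\<^sup>2 - 2 * (\<Sum>k\<in>S. l k * inner b (a k)) + (\<Sum>k\<in>S. l k * (norm (a k))\<^sup>2)"
    by (simp add: sum.distrib sum_subtractf sum_distrib_left sum_distrib_right)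
  also have "(\<Sum>k\<in>S. l k * inner b (a k)) = inner b (\<Sum>k\<in>S. l k *\<^sub>R a k)"
    by (simp add: inner_sum_right)
  finally show ?thesis using assms by simp
qed

lemma var_double:
  fixes a :: "'b \<Rightarrow> 'a::real_inner"
  assumes "sum l S = 1"
  shows "(\<Sum>k\<in>S. l k * (\<Sum>j\<in>S. l j * (norm (a k - a j))\<^sup>2)) = 2 * (\<Sum>k\<in>S. l k * (norm (a k))\<^sup>2) - 2 * (norm (\<Sum>k\<in>S. l k *\<^sub>R a k))\<^sup>2"
proof -
  define abar where "abar = (\<Sum>k\<in>S. l k *\<^sub>R a k)"
  define Q where "Q = (\<Sum>k\<in>S. l k * (norm (a k))\<^sup>2)"
  have "(\<Sum>k\<in>S. l k * (\<Sum>j\<in>S. l j * (norm (a k - a j))\<^sup>2)) = (\<Sum>k\<in>S. l k * ((norm (a k))\<^sup>2 - 2 * inner (a k) abar + Q))"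
    using wsum_sq[OF assms, where a=a] by (simp add: abar_def Q_def)
  also have "\<dots> = (\<Sum>k\<in>S. l k * (norm (a k))\<^sup>2) - 2 * (\<Sum>k\<in>S. l k * inner (a k) abar) + (\<Sum>k\<in>S. l k) * Q"
    by (simp add: algebra_simps sum.distrib sum_subtractf sum_distrib_left sum_distrib_right)
  also have "(\<Sum>k\<in>S. l k * inner (a k) abar) = inner abar abar"
    by (simp add: abar_def inner_sum_left)
  finally show ?thesis using assms by (simp add: Q_def abar_def power2_norm_eq_inner)
qed

lemma pair_nonexp:
  fixes xk xj vk vj :: "'a::real_inner"
  assumes "\<mu> > 0" "\<mu> * (norm (vk - vj))\<^sup>2 \<le> inner (xk - xj) (vk - vj)"
  shows "(norm (((2*\<mu>) *\<^sub>R vk - xk) - ((2*\<mu>) *\<^sub>R vj - xj)))\<^sup>2 \<le> (norm (xk - xj))\<^sup>2"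
proof -
  have e: "((2*\<mu>) *\<^sub>R vk - xk) - ((2*\<mu>) *\<^sub>R vj - xj) = (2*\<mu>) *\<^sub>R (vk - vj) - (xk - xj)"
    by (simp add: algebra_simps)
  have "(norm ((2*\<mu>) *\<^sub>R (vk - vj) - (xk - xj)))\<^sup>2
      = 4*\<mu>\<^sup>2 * (norm (vk - vj))\<^sup>2 - 4*\<mu> * inner (xk - xj) (vk - vj) + (norm (xk - xj))\<^sup>2"
    using norm_diff_sq[of "(2*\<mu>) *\<^sub>R (vk - vj)" "xk - xj"] by (simp add: power_mult_distrib inner_commute)
  moreover have "4*\<mu>\<^sup>2 * (norm (vk - vj))\<^sup>2 \<le> 4*\<mu> * inner (xk - xj) (vk - vj)"
    using mult_left_mono[OF assms(2), of "4*\<mu>"] assms(1) by (simp add: power2_eq_square algebra_simps)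
  ultimately show ?thesis unfolding e by linarith
qed

lemma key_K:
  fixes x v :: "'b \<Rightarrow> 'a::real_inner"
  assumes mu: "\<mu> > 0" and S: "sum l S = 1" "\<forall>k\<in>S. l k \<ge> 0"
    and pw: "\<forall>k\<in>S. \<forall>j\<in>S. \<mu> * (norm (v k - v j))\<^sup>2 \<le> inner (x k - x j) (v k - v j)"
  shows "(\<Sum>k\<in>S. l k * ((norm ((\<Sum>j\<in>S. l j *\<^sub>R (v j + (1/(2*\<mu>)) *\<^sub>R (z - x j))) - (v k + (1/(2*\<mu>)) *\<^sub>R (z - x k))))\<^sup>2
      - (norm (z - x k) / (2*\<mu>))\<^sup>2)) \<le> 0"
proof -
  define c where "c = 1/(2*\<mu>)"
  define a where "a = (\<lambda>k. (2*\<mu>) *\<^sub>R v k - x k)"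
  define abar where "abar = (\<Sum>k\<in>S. l k *\<^sub>R a k)"
  define xbar where "xbar = (\<Sum>k\<in>S. l k *\<^sub>R x k)"
  have cc: "v k + c *\<^sub>R (z - x k) = c *\<^sub>R (a k + z)" for k
    using mu by (simp add: c_def a_def algebra_simps)
  have w: "(\<Sum>j\<in>S. l j *\<^sub>R (v j + c *\<^sub>R (z - x j))) = c *\<^sub>R (abar + z)"
  proof -
    have "(\<Sum>j\<in>S. l j *\<^sub>R (v j + c *\<^sub>R (z - x j))) = (\<Sum>j\<in>S. c *\<^sub>R (l j *\<^sub>R a j) + l j *\<^sub>R (c *\<^sub>R z))"
      by (rule sum.cong) (simp_all only: cc, simp add: scaleR_add_right scaleR_scaleR mult.commute)
    also have "\<dots> = c *\<^sub>R abar + (\<Sum>j\<in>S. l j) *\<^sub>R (c *\<^sub>R z)"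
      by (simp add: sum.distrib abar_def scaleR_sum_right scaleR_sum_left[symmetric] sum_distrib_right)
    finally show ?thesis using S by (simp add: algebra_simps)
  qed
  have t1: "(norm (c *\<^sub>R (abar + z) - (v k + c *\<^sub>R (z - x k))))\<^sup>2 - (norm (z - x k) / (2*\<mu>))\<^sup>2
      = c\<^sup>2 * ((norm (abar - a k))\<^sup>2 - (norm (z - x k))\<^sup>2)" for k
  proof -
    have e: "c *\<^sub>R (abar + z) - (v k + c *\<^sub>R (z - x k)) = c *\<^sub>R (abar - a k)"
      unfolding cc by (simp add: algebra_simps)
    have n1: "(norm (c *\<^sub>R (abar - a k)))\<^sup>2 = c\<^sup>2 * (norm (abar - a k))\<^sup>2"
      by (simp add: power_mult_distrib)
    have n2: "(norm (z - x k) / (2*\<mu>))\<^sup>2 = c\<^sup>2 * (norm (z - x k))\<^sup>2"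
      by (simp add: c_def power_divide)
    show ?thesis unfolding e n1 n2 by (simp add: algebra_simps)
  qed
  have "(\<Sum>k\<in>S. l k * ((norm (abar - a k))\<^sup>2 - (norm (z - x k))\<^sup>2)) \<le> 0"
  proof -
    have A: "(\<Sum>k\<in>S. l k * (norm (abar - a k))\<^sup>2) = (\<Sum>k\<in>S. l k * (norm (a k))\<^sup>2) - (norm abar)\<^sup>2"
      using wsum_sq[OF S(1), of abar a] by (simp add: abar_def power2_norm_eq_inner)
    have X: "(\<Sum>k\<in>S. l k * (norm (z - x k))\<^sup>2) = (norm z)\<^sup>2 - 2 * inner z xbar + (\<Sum>k\<in>S. l k * (norm (x k))\<^sup>2)"
      using wsum_sq[OF S(1), of z x] by (simp add: xbar_def)
    have Z: "0 \<le> (norm z)\<^sup>2 - 2 * inner z xbar + (norm xbar)\<^sup>2"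
      using norm_diff_sq[of z xbar] by (metis zero_le_power2)
    have "(\<Sum>k\<in>S. l k * (\<Sum>j\<in>S. l j * (norm (a k - a j))\<^sup>2)) \<le> (\<Sum>k\<in>S. l k * (\<Sum>j\<in>S. l j * (norm (x k - x j))\<^sup>2))"
      apply (rule sum_mono) apply (rule mult_left_mono) apply (rule sum_mono) apply (rule mult_left_mono)
      using pw S(2) pair_nonexp[OF mu] by (auto simp: a_def) blast
    then have "(\<Sum>k\<in>S. l k * (norm (a k))\<^sup>2) - (norm abar)\<^sup>2 \<le> (\<Sum>k\<in>S. l k * (norm (x k))\<^sup>2) - (norm xbar)\<^sup>2"
      unfolding var_double[OF S(1)] abar_def xbar_def by simp
    then show ?thesis using A X Z by (simp add: sum_subtractf algebra_simps)
  qed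
  then have "c\<^sup>2 * (\<Sum>k\<in>S. l k * ((norm (abar - a k))\<^sup>2 - (norm (z - x k))\<^sup>2)) \<le> 0"
    by (simp add: mult_nonneg_nonpos)
  then show ?thesis
    unfolding c_def[symmetric] w t1 by (simp add: sum_distrib_left algebra_simps)
qed



lemma parallelogram_mid:
  fixes a b c :: "'a::real_inner"
  shows "(norm ((1/2) *\<^sub>R (a + b) - c))\<^sup>2 = ((norm (a - c))\<^sup>2 + (norm (b - c))\<^sup>2)/2 - (norm (a - b))\<^sup>2/4"
proof -
  have e1: "(1/2) *\<^sub>R (a + b) - c = (1/2) *\<^sub>R ((a - c) + (b - c))"
    by (simp add: algebra_simps flip: scaleR_add_left)
  have e2: "a - b = (a - c) - (b - c)" by simp
  show ?thesis unfolding e1 e2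
    apply (simp add: power2_norm_eq_inner inner_add inner_diff inner_commute algebra_simps)
    by (simp add: field_simps)
qed

lemma strong_min:
  fixes \<Phi> :: "'a::{real_inner,complete_space} \<Rightarrow> real"
  assumes bdd: "\<And>u. B \<le> \<Phi> u"
    and mid: "\<And>a b. \<Phi> ((1/2) *\<^sub>R (a + b)) \<le> (\<Phi> a + \<Phi> b)/2 - (norm (a - b))\<^sup>2/4"
    and cl: "\<And>t. closed {u. \<Phi> u \<le> t}"
  shows "\<exists>u. \<forall>w. \<Phi> u \<le> \<Phi> w"
proof -
  define m where "m = Inf (range \<Phi>)"
  have bb: "bdd_below (range \<Phi>)" using bdd by (metis bdd_belowI2)
  have lo: "m \<le> \<Phi> u" for u unfolding m_def using bb by (simp add: cInf_lower)
  have ex: "\<exists>u. \<Phi> u < m + e" if "e > 0" for e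
  proof -
    have "Inf (range \<Phi>) < m + e" using that m_def by simp
    then show ?thesis using cInf_lessD[of "range \<Phi>" "m + e"] by auto
  qed
  have "\<forall>n. \<exists>u. \<Phi> u < m + inverse (real (Suc n))" using ex by simp
  from choice[OF this] obtain s where s: "\<And>n. \<Phi> (s n) < m + inverse (real (Suc n))" by blast
  have close: "(norm (a - b))\<^sup>2 < 4 * e" if "\<Phi> a < m + e" "\<Phi> b < m + e" for a b e
    using mid[of a b] lo[of "(1/2) *\<^sub>R (a + b)"] that by argo
  have sN: "\<Phi> (s n) < m + inverse (real (Suc N))" if "n \<ge> N" for n N
  proof -
    have "inverse (real (Suc n)) \<le> inverse (real (Suc N))" using that by (simp add: le_imp_inverse_le)
    then show ?thesis using s[of n] by linarith
  qed
  have "Cauchy s"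
  proof (rule CauchyI)
    fix e :: real assume e: "e > 0"
    then have "e\<^sup>2/4 > 0" by simp
    then obtain N where N: "inverse (real (Suc N)) < e\<^sup>2/4" using reals_Archimedean by blast
    show "\<exists>M. \<forall>m\<ge>M. \<forall>n\<ge>M. norm (s m - s n) < e"
    proof (intro exI allI impI)
      fix a b assume "a \<ge> N" "b \<ge> N"
      then have "(norm (s a - s b))\<^sup>2 < 4 * inverse (real (Suc N))"
        using close sN by blast
      also have "\<dots> < e\<^sup>2" using N by simp
      finally show "norm (s a - s b) < e" using e by (simp add: power_less_imp_less_base)
    qed
  qed
  then obtain u where u: "s \<longlonglongrightarrow> u" using Cauchy_convergent_iff convergent_def by blast
  have "\<Phi> u \<le> m + inverse (real (Suc N))" for N
  proof -
    have A: "(\<lambda>n. s (n + N)) \<longlonglongrightarrow> u" using LIMSEQ_ignore_initial_segment[OF u] .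
    have B: "\<And>n. s (n + N) \<in> {u. \<Phi> u \<le> m + inverse (real (Suc N))}"
      using sN by (simp add: less_imp_le)
    show ?thesis using closed_sequentially[OF cl B A] by simp
  qed
  note uN = this
  have "\<Phi> u \<le> m"
  proof (rule ccontr)
    assume "\<not> \<Phi> u \<le> m"
    then have "\<Phi> u - m > 0" by simp
    then obtain N where "inverse (real (Suc N)) < \<Phi> u - m" using reals_Archimedean by blast
    then show False using uN[of N] by linarith
  qed
  then show ?thesis using lo by (meson order.trans)
qed



lemma norm_add_scale_sq:
  fixes a b :: "'a::real_inner"
  shows "(norm (a + t *\<^sub>R b))\<^sup>2 = (norm a)\<^sup>2 + 2*t*inner a b + t\<^sup>2 * (norm b)\<^sup>2"
  unfolding power2_norm_eq_inner by (simp add: inner_add inner_commute power2_eq_square algebra_simps)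

lemma gordan:
  fixes P :: "'a::real_inner set"
  assumes "finite P" "P \<noteq> {}" "u \<notin> convex hull P"
  shows "\<exists>d. \<forall>q\<in>P. inner (u - q) d < 0"
proof -
  let ?H = "convex hull P"
  have cH: "compact ?H" using finite_imp_compact_convex_hull[OF assms(1)] .
  have nH: "?H \<noteq> {}" using assms(2) by simp
  have "continuous_on ?H (\<lambda>y. (norm (u - y))\<^sup>2)" by (intro continuous_intros)
  then obtain q0 where q0: "q0 \<in> ?H" and qmin: "\<And>y. y \<in> ?H \<Longrightarrow> (norm (u - q0))\<^sup>2 \<le> (norm (u - y))\<^sup>2"
    using continuous_attains_inf[OF cH nH] by blast
  have ne: "u \<noteq> q0" using q0 assms(3) by auto
  have vi: "inner (u - q0) (q - q0) \<le> 0" if "q \<in> ?H" for q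
  proof (rule ccontr)
    define \<alpha> where "\<alpha> = inner (u - q0) (q - q0)"
    define \<beta> where "\<beta> = (norm (q - q0))\<^sup>2"
    assume "\<not> inner (u - q0) (q - q0) \<le> 0"
    then have a: "\<alpha> > 0" by (simp add: \<alpha>_def)
    have b: "\<beta> > 0"
    proof -
      have "q \<noteq> q0" using a by (auto simp: \<alpha>_def)
      then show ?thesis by (simp add: \<beta>_def)
    qed
    define t where "t = min 1 (\<alpha> / \<beta>)"
    have t0: "t > 0" using a b by (simp add: t_def)
    have t1: "t \<le> 1" by (simp add: t_def)
    have tb: "t * \<beta> \<le> \<alpha>" using b by (simp add: t_def min_def field_simps)
    have yH: "(1 - t) *\<^sub>R q0 + t *\<^sub>R q \<in> ?H"
      using convexD[OF convex_convex_hull q0 that, of "1 - t" t] t0 t1 by simp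
    have ey: "u - ((1 - t) *\<^sub>R q0 + t *\<^sub>R q) = (u - q0) - t *\<^sub>R (q - q0)"
      by (simp add: algebra_simps)
    have "(norm (u - ((1 - t) *\<^sub>R q0 + t *\<^sub>R q)))\<^sup>2 = (norm (u - q0))\<^sup>2 - 2 * t * \<alpha> + t\<^sup>2 * \<beta>"
      unfolding ey \<alpha>_def \<beta>_def using norm_add_scale_sq[of "u - q0" "-t" "q - q0"]
      by simp
    also have "\<dots> < (norm (u - q0))\<^sup>2"
    proof -
      have "t\<^sup>2 * \<beta> \<le> t * \<alpha>" using tb t0 by (simp add: power2_eq_square mult_left_mono mult.assoc)
      moreover have "t * \<alpha> > 0" using t0 a by simp
      ultimately show ?thesis by linarith
    qed
    finally show False using qmin[OF yH] by linarith
  qed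
  show ?thesis
  proof (intro exI ballI)
    fix q assume "q \<in> P"
    then have qH: "q \<in> ?H" by (simp add: hull_inc)
    have "inner (u - q) (q0 - u) = - (norm (u - q0))\<^sup>2 + inner (u - q0) (q - q0)"
      by (simp add: power2_norm_eq_inner inner_diff inner_commute algebra_simps)
    also have "\<dots> < 0"
    proof -
      have "(norm (u - q0))\<^sup>2 > 0" using ne by simp
      then show ?thesis using vi[OF qH] by linarith
    qed
    finally show "inner (u - q) (q0 - u) < 0" .
  qed
qed

lemma descent:
  fixes cc :: "'b \<Rightarrow> 'a::real_inner"
  assumes F: "finite F"
    and le: "\<forall>k\<in>F. (norm (u - cc k))\<^sup>2 - R k \<le> m"
    and act: "\<forall>k\<in>F. (norm (u - cc k))\<^sup>2 - R k = m \<longrightarrow> inner (u - cc k) d < 0"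
  shows "\<exists>t. \<forall>k\<in>F. (norm (u + t *\<^sub>R d - cc k))\<^sup>2 - R k < m"
proof -
  have exp: "(norm (u + t *\<^sub>R d - cc k))\<^sup>2 - R k = ((norm (u - cc k))\<^sup>2 - R k) + t * (2 * inner (u - cc k) d + t * (norm d)\<^sup>2)" for t k
  proof -
    have "u + t *\<^sub>R d - cc k = (u - cc k) + t *\<^sub>R d" by simp
    then show ?thesis using norm_add_scale_sq[of "u - cc k" t d]
      by (simp add: power2_eq_square algebra_simps)
  qed
  have ev: "\<forall>k\<in>F. eventually (\<lambda>t. (norm (u + t *\<^sub>R d - cc k))\<^sup>2 - R k < m) (at_right (0::real))"
  proof
    fix k assume k: "k \<in> F"
    let ?g = "\<lambda>t::real. 2 * inner (u - cc k) d + t * (norm d)\<^sup>2"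
    have gl: "(?g \<longlongrightarrow> 2 * inner (u - cc k) d + 0 * (norm d)\<^sup>2) (at_right 0)"
      by (intro tendsto_intros)
    show "eventually (\<lambda>t. (norm (u + t *\<^sub>R d - cc k))\<^sup>2 - R k < m) (at_right 0)"
    proof (cases "(norm (u - cc k))\<^sup>2 - R k = m")
      case True
      then have "2 * inner (u - cc k) d + 0 * (norm d)\<^sup>2 < 0" using act k by simp
      then have e1: "eventually (\<lambda>t. ?g t < 0) (at_right 0)" using order_tendstoD(2)[OF gl] by blast
      have e2: "eventually (\<lambda>t::real. 0 < t) (at_right 0)" by (rule eventually_at_right_less)
      show ?thesis using eventually_conj[OF e1 e2]
        by (rule eventually_mono) (simp add: exp True mult_pos_neg)
    next
      case False
      have "(norm (u - cc k))\<^sup>2 - R k \<le> m" using le k by blast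
      then have lt: "((norm (u - cc k))\<^sup>2 - R k) + 0 * ?g 0 < m" using False by simp
      have "((\<lambda>t. ((norm (u - cc k))\<^sup>2 - R k) + t * ?g t) \<longlongrightarrow> ((norm (u - cc k))\<^sup>2 - R k) + 0 * ?g 0) (at_right 0)"
        by (intro tendsto_intros)
      from order_tendstoD(2)[OF this lt] show ?thesis by (simp add: exp)
    qed
  qed
  have "eventually (\<lambda>t. \<forall>k\<in>F. (norm (u + t *\<^sub>R d - cc k))\<^sup>2 - R k < m) (at_right (0::real))"
    by (rule eventually_ball_finite[OF F ev])
  then show ?thesis using eventually_happens trivial_limit_at_right_real by blast
qed



lemma fc:
  fixes cc :: "'b \<Rightarrow> 'a::{real_inner,complete_space}" and R :: "'b \<Rightarrow> real"
  assumes F: "finite F" "F \<noteq> {}"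
    and H: "\<And>I w. I \<subseteq> F \<Longrightarrow> I \<noteq> {} \<Longrightarrow> w \<in> convex hull (cc ` I) \<Longrightarrow> \<exists>k\<in>I. (norm (w - cc k))\<^sup>2 - R k \<le> 0"
  shows "\<exists>u. \<forall>k\<in>F. (norm (u - cc k))\<^sup>2 - R k \<le> 0"
proof -
  define p where "p = (\<lambda>k u. (norm (u - cc k))\<^sup>2 - R k)"
  define \<Phi> where "\<Phi> = (\<lambda>u. Max ((\<lambda>k. p k u) ` F))"
  have fin: "finite ((\<lambda>k. p k u) ` F)" "(\<lambda>k. p k u) ` F \<noteq> {}" for u using F by auto
  have ge: "p k u \<le> \<Phi> u" if "k \<in> F" for k u using Max_ge[OF fin(1)] that by (simp add: \<Phi>_def)
  have ex: "\<exists>k\<in>F. \<Phi> u = p k u" for u using Max_in[OF fin, of u] by (auto simp: \<Phi>_def)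
  have leiff: "\<Phi> u \<le> t \<longleftrightarrow> (\<forall>k\<in>F. p k u \<le> t)" for u t using Max_le_iff[OF fin, of u t] by (simp add: \<Phi>_def)
  have lessiff: "\<Phi> u < t \<longleftrightarrow> (\<forall>k\<in>F. p k u < t)" for u t using Max_less_iff[OF fin, of u t] by (simp add: \<Phi>_def)
  obtain k0 where k0: "k0 \<in> F" using F by blast
  have bdd: "- R k0 \<le> \<Phi> u" for u
  proof -
    have "p k0 u \<le> \<Phi> u" using ge[OF k0] .
    moreover have "0 \<le> (norm (u - cc k0))\<^sup>2" by simp
    ultimately show ?thesis unfolding p_def by linarith
  qed
  have mid: "\<Phi> ((1/2) *\<^sub>R (a + b)) \<le> (\<Phi> a + \<Phi> b)/2 - (norm (a - b))\<^sup>2/4" for a b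
  proof -
    obtain k where k: "k \<in> F" "\<Phi> ((1/2) *\<^sub>R (a + b)) = p k ((1/2) *\<^sub>R (a + b))" using ex by blast
    have "p k ((1/2) *\<^sub>R (a + b)) = (p k a + p k b)/2 - (norm (a - b))\<^sup>2/4"
      unfolding p_def parallelogram_mid by (simp add: field_simps)
    then show ?thesis using k ge[OF k(1), of a] ge[OF k(1), of b] by argo
  qed
  have cl: "closed {u. \<Phi> u \<le> t}" for t
  proof -
    have "{u. \<Phi> u \<le> t} = (\<Inter>k\<in>F. {u. p k u \<le> t})" by (auto simp: leiff)
    moreover have "closed {u. p k u \<le> t}" for k
      unfolding p_def by (intro closed_Collect_le continuous_intros)
    ultimately show ?thesis by (simp add: closed_INT)
  qed
  obtain u where umin: "\<And>w. \<Phi> u \<le> \<Phi> w" using strong_min[OF bdd mid cl] by blast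
  show ?thesis
  proof (cases "\<Phi> u \<le> 0")
    case True then show ?thesis using leiff p_def by auto
  next
    case False
    define I where "I = {k\<in>F. p k u = \<Phi> u}"
    have IF: "I \<subseteq> F" by (auto simp: I_def)
    have In: "I \<noteq> {}" using ex[of u] by (auto simp: I_def)
    have Ifin: "finite I" using F(1) IF finite_subset by blast
    show ?thesis
    proof (cases "u \<in> convex hull (cc ` I)")
      case True
      then obtain k where "k \<in> I" "p k u \<le> 0" using H[OF IF In] by (auto simp: p_def)
      then show ?thesis using False by (auto simp: I_def)
    next
      case nc: False
      obtain d where d: "\<forall>q\<in>cc ` I. inner (u - q) d < 0"
        using gordan[of "cc ` I" u] Ifin In nc by auto
      have "\<exists>t. \<forall>k\<in>F. (norm (u + t *\<^sub>R d - cc k))\<^sup>2 - R k < \<Phi> u"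
      proof (rule descent[OF F(1)])
        show "\<forall>k\<in>F. (norm (u - cc k))\<^sup>2 - R k \<le> \<Phi> u" using ge by (simp add: p_def)
        show "\<forall>k\<in>F. (norm (u - cc k))\<^sup>2 - R k = \<Phi> u \<longrightarrow> inner (u - cc k) d < 0"
          using d by (auto simp: I_def p_def)
      qed
      then obtain t where "\<forall>k\<in>F. p k (u + t *\<^sub>R d) < \<Phi> u" by (auto simp: p_def)
      then have "\<Phi> (u + t *\<^sub>R d) < \<Phi> u" using lessiff by blast
      then show ?thesis using umin[of "u + t *\<^sub>R d"] by simp
    qed
  qed
qed



lemma BL:
  fixes C :: "'a::{real_inner,complete_space} set set"
  assumes cv: "\<And>S. S \<in> C \<Longrightarrow> convex S" and cl: "\<And>S. S \<in> C \<Longrightarrow> closed S"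
    and B0: "B0 \<subseteq> cball 0 Rb" "convex B0"
    and fi: "\<And>F. finite F \<Longrightarrow> F \<subseteq> C \<Longrightarrow> \<Inter>(insert B0 F) \<noteq> {}"
  shows "\<exists>u. \<forall>S\<in>C. u \<in> S"
proof -
  define K where "K = (\<lambda>F. \<Inter>(insert B0 F))"
  define s where "s = (\<lambda>F. Inf ((\<lambda>u. (norm u)\<^sup>2) ` K F))"
  define G where "G = {F. finite F \<and> F \<subseteq> C}"
  have Kne: "K F \<noteq> {}" if "F \<in> G" for F using fi that by (auto simp: K_def G_def)
  have Kcv: "convex (K F)" if "F \<in> G" for F
    using that cv B0(2) unfolding K_def G_def by (intro convex_Inter) auto
  have KB: "K F \<subseteq> cball 0 Rb" for F using B0(1) by (auto simp: K_def)
  have Kanti: "K F' \<subseteq> K F" if "F \<subseteq> F'" for F F' using that by (auto simp: K_def)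
  have bb: "bdd_below ((\<lambda>u. (norm u)\<^sup>2) ` K F)" for F
    by (rule bdd_belowI[of _ 0]) auto
  have slo: "s F \<le> (norm u)\<^sup>2" if "u \<in> K F" for F u
    unfolding s_def using that bb by (intro cInf_lower) auto
  have sex: "\<exists>u\<in>K F. (norm u)\<^sup>2 < s F + e" if "F \<in> G" "e > 0" for F e
  proof -
    have "Inf ((\<lambda>u. (norm u)\<^sup>2) ` K F) < s F + e" using that s_def by simp
    then show ?thesis using cInf_lessD[of "(\<lambda>u. (norm u)\<^sup>2) ` K F" "s F + e"] Kne[OF that(1)] by auto
  qed
  have smono: "s F \<le> s F'" if FG: "F' \<in> G" "F \<subseteq> F'" for F F'
  proof -
    have "s F \<le> (norm u)\<^sup>2" if "u \<in> K F'" for u using slo Kanti[OF \<open>F \<subseteq> F'\<close>] that by blast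
    then show ?thesis unfolding s_def using Kne[OF FG(1)] by (intro cInf_greatest) auto
  qed
  have sbd: "s F \<le> Rb\<^sup>2" if FG: "F \<in> G" for F
  proof -
    obtain u where u: "u \<in> K F" using Kne[OF FG] by blast
    then have "u \<in> cball 0 Rb" using KB by blast
    then have "norm u \<le> Rb" by simp
    then have "(norm u)\<^sup>2 \<le> Rb\<^sup>2" by (simp add: power_mono)
    then show ?thesis using slo[OF u] by linarith
  qed
  have dist_le: "(norm (x - y))\<^sup>2 \<le> 2 * (norm x)\<^sup>2 + 2 * (norm y)\<^sup>2 - 4 * s F"
    if "F \<in> G" "x \<in> K F" "y \<in> K F" for F x y
  proof -
    have "(1/2) *\<^sub>R (x + y) \<in> K F"
      using convexD[OF Kcv[OF that(1)] that(2,3), of "1/2" "1/2"] by (simp add: scaleR_add_right)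
    then have "s F \<le> (norm ((1/2) *\<^sub>R (x + y) - 0))\<^sup>2" using slo by (metis diff_zero)
    then show ?thesis using parallelogram_mid[of x y 0] by (simp only: diff_zero) argo
  qed
  define SS where "SS = s ` G"
  have SSne: "SS \<noteq> {}" by (auto simp: SS_def G_def)
  have SSbdd: "bdd_above SS" unfolding SS_def using sbd by (metis bdd_aboveI2)
  define Sv where "Sv = Sup SS"
  have sleS: "s F \<le> Sv" if "F \<in> G" for F unfolding Sv_def SS_def using that SSbdd
    by (intro cSup_upper) (auto simp: SS_def)
  have "\<forall>n. \<exists>F. F \<in> G \<and> Sv - inverse (real (Suc n)) < s F"
  proof
    fix n
    have "Sv - inverse (real (Suc n)) < Sup SS" by (simp add: Sv_def)
    then show "\<exists>F. F \<in> G \<and> Sv - inverse (real (Suc n)) < s F"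
      using less_cSupE[OF _ SSne] by (auto simp: SS_def)
  qed
  from choice[OF this] obtain Fs where Fs: "\<And>n. Fs n \<in> G" "\<And>n. Sv - inverse (real (Suc n)) < s (Fs n)" by blast
  define H where "H = (\<lambda>n. \<Union>(Fs ` {..n}))"
  have HG: "H n \<in> G" for n using Fs(1) by (auto simp: H_def G_def)
  have Hmono: "H n \<subseteq> H n'" if "n \<le> n'" for n n' using that unfolding H_def
    by (intro Union_mono image_mono) auto
  have sH: "Sv - inverse (real (Suc n)) < s (H n)" for n
    using Fs(2)[of n] smono[OF HG, of "Fs n" n] by (force simp: H_def)
  have "\<forall>n. \<exists>u. u \<in> K (H n) \<and> (norm u)\<^sup>2 < s (H n) + inverse (real (Suc n))"
  proof
    fix n
    have "inverse (real (Suc n)) > 0" by simp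
    then show "\<exists>u. u \<in> K (H n) \<and> (norm u)\<^sup>2 < s (H n) + inverse (real (Suc n))"
      using sex[OF HG] by blast
  qed
  from choice[OF this] obtain u where u: "\<And>n. u n \<in> K (H n)" "\<And>n. (norm (u n))\<^sup>2 < s (H n) + inverse (real (Suc n))"
    by blast
  have inv_mono: "inverse (real (Suc a)) \<le> inverse (real (Suc N))" if "N \<le> a" for a N
    using that by (simp add: le_imp_inverse_le)
  have est: "(norm (x - u n))\<^sup>2 < 8 * inverse (real (Suc n))"
    if "x \<in> K (H n)" "(norm x)\<^sup>2 < Sv + inverse (real (Suc n))" for x n
  proof -
    have "(norm (x - u n))\<^sup>2 \<le> 2 * (norm x)\<^sup>2 + 2 * (norm (u n))\<^sup>2 - 4 * s (H n)"
      using dist_le[OF HG that(1) u(1)] .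
    moreover have "s (H n) \<le> Sv" using sleS[OF HG] .
    ultimately show ?thesis using u(2)[of n] sH[of n] that(2) by linarith
  qed
  have uS: "(norm (u a))\<^sup>2 < Sv + inverse (real (Suc N))" if "N \<le> a" for a N
    using u(2)[of a] sleS[OF HG, of a] inv_mono[OF that] by linarith
  have ev: "\<forall>\<^sub>F n in sequentially. 8 * inverse (real (Suc n)) < e\<^sup>2" if "e > 0" for e :: real
  proof -
    have "(\<lambda>n. 8 * inverse (real (Suc n))) \<longlonglongrightarrow> 8 * 0"
      by (intro tendsto_intros LIMSEQ_inverse_real_of_nat)
    moreover have "8 * 0 < e\<^sup>2" using that by simp
    ultimately show ?thesis using order_tendstoD(2) by blast
  qed
  have "Cauchy u"
  proof (rule CauchyI)
    fix e :: real assume e: "e > 0"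
    obtain N where N: "8 * inverse (real (Suc N)) < e\<^sup>2" using eventually_happens[OF ev[OF e]] by auto
    show "\<exists>M. \<forall>m\<ge>M. \<forall>n\<ge>M. norm (u m - u n) < e"
    proof (intro exI allI impI)
      fix a b assume ab: "a \<ge> N" "b \<ge> N"
      have "(norm (u a - u b))\<^sup>2 \<le> 2 * (norm (u a))\<^sup>2 + 2 * (norm (u b))\<^sup>2 - 4 * s (H N)"
        using dist_le[OF HG[of N], of "u a" "u b"] u(1) Kanti[OF Hmono] ab by blast
      also have "\<dots> < 8 * inverse (real (Suc N))"
        using uS[OF ab(1)] uS[OF ab(2)] sH[of N] by linarith
      also have "\<dots> < e\<^sup>2" using N .
      finally show "norm (u a - u b) < e" using e by (simp add: power_less_imp_less_base)
    qed
  qed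
  then obtain x where x: "u \<longlonglongrightarrow> x" using Cauchy_convergent_iff convergent_def by blast
  show ?thesis
  proof (intro exI ballI)
    fix S assume S: "S \<in> C"
    have "\<exists>y\<in>S. dist y x < e" if e: "e > 0" for e
    proof -
      have e2: "e/2 > 0" using e by simp
      have "\<forall>\<^sub>F n in sequentially. dist (u n) x < e/2" using x e2 by (rule tendstoD)
      then obtain n where n1: "dist (u n) x < e/2" and n2: "8 * inverse (real (Suc n)) < (e/2)\<^sup>2"
        using eventually_happens[OF eventually_conj[OF _ ev[OF e2]]] by auto
      have HS: "insert S (H n) \<in> G" using HG[of n] S by (auto simp: G_def)
      obtain w where w: "w \<in> K (insert S (H n))" "(norm w)\<^sup>2 < s (insert S (H n)) + inverse (real (Suc n))"
        using sex[OF HS, of "inverse (real (Suc n))"] by auto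
      have wS: "w \<in> S" using w(1) by (auto simp: K_def)
      have wH: "w \<in> K (H n)" using w(1) Kanti[of "H n" "insert S (H n)"] by blast
      have "(norm w)\<^sup>2 < Sv + inverse (real (Suc n))" using w(2) sleS[OF HS] by linarith
      then have "(norm (w - u n))\<^sup>2 < (e/2)\<^sup>2" using est[OF wH] n2 by linarith
      then have "norm (w - u n) < e/2" using e2 power_less_imp_less_base[of "norm (w - u n)" 2 "e/2"] by simp
      then have "dist w x < e" using n1 dist_triangle[of w x "u n"] by (simp add: dist_norm)
      then show ?thesis using wS by blast
    qed
    then show "x \<in> S" using closed_approachable[OF cl[OF S]] by blast
  qed
qed



lemma uniq:
  fixes A :: "'a::real_inner \<Rightarrow> 'a set"
  assumes r: "\<rho> > -1" and c: "comonotone \<rho> A" and h: "u \<in> A p" "u' \<in> A p'" "p + u = p' + u'"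
  shows "p = p' \<and> u = u'"
proof -
  have i: "\<rho> * (norm (u - u'))\<^sup>2 \<le> inner (p - p') (u - u')" using c h unfolding comonotone_def by blast
  have e: "p - p' = - (u - u')" using h(3) by (simp add: algebra_simps)
  have "inner (p - p') (u - u') = - (norm (u - u'))\<^sup>2" unfolding e power2_norm_eq_inner inner_minus_left ..
  with i have "(1 + \<rho>) * (norm (u - u'))\<^sup>2 \<le> 0" by (simp add: algebra_simps)
  moreover have "1 + \<rho> > 0" using r by simp
  ultimately have "(norm (u - u'))\<^sup>2 \<le> 0" by (simp add: mult_le_0_iff)
  then have "u = u'" by simp
  then show ?thesis using h(3) by simp
qed

lemma resolv:
  fixes A :: "'a::real_inner \<Rightarrow> 'a set"
  assumes r: "\<rho> > -1" and c: "comonotone \<rho> A" and h: "u \<in> A p"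
  shows "resolvent A (p + u) = p"
  unfolding resolvent_def
proof (rule the_equality)
  show "p + u - p \<in> A p" using h by simp
  fix q assume hq: "p + u - q \<in> A q"
  have "q + (p + u - q) = p + u" by simp
  from uniq[OF r c hq h this] show "q = p" by blast
qed

lemma sum_pos_weights:
  assumes "finite S" "\<forall>q\<in>S. l q \<ge> 0" "sum l S = 1" "\<forall>q\<in>S. f q > (0::real)"
  shows "(\<Sum>q\<in>S. l q * f q) > 0"
proof -
  obtain q where q: "q \<in> S" "l q > 0"
  proof (rule ccontr)
    assume "\<not> thesis"
    then have "\<forall>q\<in>S. l q = 0" using assms(2) that by force
    then show False using assms(3) by simp
  qed
  show ?thesis using assms q by (intro sum_pos2[of S q]) auto
qed

lemma exist_u:
  fixes A :: "'a::{real_inner,complete_space} \<Rightarrow> 'a set"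
  assumes r: "\<rho> > -1" and c: "comonotone \<rho> A"
  shows "\<exists>u. \<forall>y v. v \<in> A y \<longrightarrow> \<rho> * (norm (u - v))\<^sup>2 \<le> inner ((z - u) - y) (u - v)"
proof (cases "gra A = {}")
  case True
  then show ?thesis by (auto simp: gra_def)
next
  case False
  define \<mu> where "\<mu> = 1 + \<rho>"
  have mu: "\<mu> > 0" using r by (simp add: \<mu>_def)
  define G where "G = gra A"
  define cc where "cc = (\<lambda>k::'a\<times>'a. snd k + (1/(2*\<mu>)) *\<^sub>R (z - (fst k + snd k)))"
  define rr where "rr = (\<lambda>k::'a\<times>'a. norm (z - (fst k + snd k)) / (2*\<mu>))"
  have rr0: "rr k \<ge> 0" for k using mu by (simp add: rr_def)
  obtain k0 where k0: "k0 \<in> G" using False G_def by auto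
  have pw: "\<mu> * (norm (snd k - snd j))\<^sup>2 \<le> inner ((fst k + snd k) - (fst j + snd j)) (snd k - snd j)"
    if "k \<in> G" "j \<in> G" for k j
  proof -
    have "\<rho> * (norm (snd k - snd j))\<^sup>2 \<le> inner (fst k - fst j) (snd k - snd j)"
      using c that unfolding comonotone_def G_def gra_def by auto
    moreover have "(fst k + snd k) - (fst j + snd j) = (fst k - fst j) + (snd k - snd j)" by simp
    ultimately show ?thesis by (simp add: \<mu>_def inner_add_left power2_norm_eq_inner algebra_simps)
  qed
  have FC: "\<exists>u. \<forall>k\<in>F. (norm (u - cc k))\<^sup>2 - (rr k)\<^sup>2 \<le> 0" if F: "finite F" "F \<subseteq> G" "F \<noteq> {}" for F
  proof (rule fc[OF F(1) F(3)])
    fix I w assume I: "I \<subseteq> F" "I \<noteq> {}" and w: "w \<in> convex hull (cc ` I)"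
    have Ifin: "finite I" using I F finite_subset by blast
    define S where "S = cc ` I"
    have Sfin: "finite S" using Ifin by (simp add: S_def)
    obtain l where l: "\<forall>q\<in>S. 0 \<le> l q" "sum l S = 1" "(\<Sum>q\<in>S. l q *\<^sub>R q) = w"
      using w convex_hull_finite[OF Sfin] by (auto simp: S_def)
    define \<iota> where "\<iota> = (\<lambda>q. SOME k. k \<in> I \<and> cc k = q)"
    have \<iota>: "\<iota> q \<in> I \<and> cc (\<iota> q) = q" if "q \<in> S" for q
      unfolding \<iota>_def using that S_def by (metis (mono_tags, lifting) imageE someI_ex)
    define xx where "xx = (\<lambda>q. fst (\<iota> q) + snd (\<iota> q))"
    define vv where "vv = (\<lambda>q. snd (\<iota> q))"
    have pw': "\<forall>k\<in>S. \<forall>j\<in>S. \<mu> * (norm (vv k - vv j))\<^sup>2 \<le> inner (xx k - xx j) (vv k - vv j)"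
      using pw \<iota> I F unfolding xx_def vv_def by blast
    have ccq: "vv q + (1/(2*\<mu>)) *\<^sub>R (z - xx q) = q" if "q \<in> S" for q
      using \<iota>[OF that] by (simp add: vv_def xx_def cc_def)
    have rrq: "norm (z - xx q) / (2*\<mu>) = rr (\<iota> q)" for q by (simp add: xx_def rr_def)
    have "(\<Sum>k\<in>S. l k * ((norm ((\<Sum>j\<in>S. l j *\<^sub>R (vv j + (1/(2*\<mu>)) *\<^sub>R (z - xx j))) - (vv k + (1/(2*\<mu>)) *\<^sub>R (z - xx k))))\<^sup>2
      - (norm (z - xx k) / (2*\<mu>))\<^sup>2)) \<le> 0"
      using key_K[OF mu l(2) l(1) pw'] .
    moreover have "(\<Sum>j\<in>S. l j *\<^sub>R (vv j + (1/(2*\<mu>)) *\<^sub>R (z - xx j))) = w"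
      using l(3) ccq by (metis (no_types, lifting) sum.cong)
    ultimately have "(\<Sum>k\<in>S. l k * ((norm (w - cc (\<iota> k)))\<^sup>2 - (rr (\<iota> k))\<^sup>2)) \<le> 0"
      using ccq \<iota> rrq by (smt (verit, best) sum.cong)
    then obtain q where q: "q \<in> S" "(norm (w - cc (\<iota> q)))\<^sup>2 - (rr (\<iota> q))\<^sup>2 \<le> 0"
      using sum_pos_weights[OF Sfin l(1) l(2)] by (meson not_less)
    then show "\<exists>k\<in>I. (norm (w - cc k))\<^sup>2 - (rr k)\<^sup>2 \<le> 0" using \<iota>[OF q(1)] by blast
  qed
  define C where "C = (\<lambda>k. cball (cc k) (rr k)) ` G"
  define B0 where "B0 = cball (cc k0) (rr k0)"
  have "\<exists>u. \<forall>S\<in>C. u \<in> S"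
  proof (rule BL)
    show "convex S" if "S \<in> C" for S using that by (auto simp: C_def)
    show "closed S" if "S \<in> C" for S using that by (auto simp: C_def)
    show "B0 \<subseteq> cball 0 (norm (cc k0) + rr k0)" unfolding B0_def
    proof
      fix x assume "x \<in> cball (cc k0) (rr k0)"
      then have "norm (x - cc k0) \<le> rr k0" by (simp add: dist_norm norm_minus_commute)
      moreover have "norm x \<le> norm (cc k0) + norm (x - cc k0)" by (rule norm_triangle_sub)
      ultimately show "x \<in> cball 0 (norm (cc k0) + rr k0)" by simp
    qed
    show "convex B0" by (simp add: B0_def)
    fix F assume F: "finite F" "F \<subseteq> C"
    then obtain F' where F': "F' \<subseteq> G" "finite F'" "F = (\<lambda>k. cball (cc k) (rr k)) ` F'"
      unfolding C_def by (meson finite_subset_image)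
    obtain u where u: "\<forall>k\<in>insert k0 F'. (norm (u - cc k))\<^sup>2 - (rr k)\<^sup>2 \<le> 0"
      using FC[of "insert k0 F'"] F' k0 by auto
    have "u \<in> cball (cc k) (rr k)" if "k \<in> insert k0 F'" for k
    proof -
      have "(norm (u - cc k))\<^sup>2 \<le> (rr k)\<^sup>2" using u that by auto
      then have "norm (u - cc k) \<le> rr k" using rr0 power2_le_imp_le by blast
      then show ?thesis by (simp add: dist_norm norm_minus_commute)
    qed
    then have "u \<in> \<Inter>(insert B0 F)" using F'(3) by (auto simp: B0_def)
    then show "\<Inter>(insert B0 F) \<noteq> {}" by blast
  qed
  then obtain u where u: "\<forall>S\<in>C. u \<in> S" by blast
  show ?thesis
  proof (intro exI allI impI)
    fix y v assume yv: "v \<in> A y"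
    then have "(y, v) \<in> G" by (simp add: G_def gra_def)
    then have "u \<in> cball (cc (y, v)) (rr (y, v))" using u by (auto simp: C_def)
    then have d: "norm (u - cc (y, v)) \<le> rr (y, v)" by (simp add: dist_norm norm_minus_commute)
    define b where "b = z - (y + v)"
    define \<delta> where "\<delta> = 1/(2*\<mu>)"
    have e: "u - cc (y, v) = (u - v) + (- \<delta>) *\<^sub>R b" by (simp add: cc_def b_def \<delta>_def)
    have "(norm (u - cc (y, v)))\<^sup>2 = (norm (u - v))\<^sup>2 - 2 * \<delta> * inner (u - v) b + \<delta>\<^sup>2 * (norm b)\<^sup>2"
      unfolding e norm_add_scale_sq by simp
    moreover have "(rr (y, v))\<^sup>2 = \<delta>\<^sup>2 * (norm b)\<^sup>2"
      by (simp add: rr_def b_def \<delta>_def power_divide)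
    moreover have "(norm (u - cc (y, v)))\<^sup>2 \<le> (rr (y, v))\<^sup>2"
      using d by (simp add: power_mono)
    ultimately have "(norm (u - v))\<^sup>2 \<le> 2 * \<delta> * inner (u - v) b" by linarith
    then have "\<mu> * (norm (u - v))\<^sup>2 \<le> \<mu> * (2 * \<delta> * inner (u - v) b)" using mu by simp
    also have "\<dots> = inner (u - v) b" using mu by (simp add: \<delta>_def)
    finally have m: "\<mu> * (norm (u - v))\<^sup>2 \<le> inner (u - v) b" .
    have e2: "(z - u) - y = b - (u - v)" by (simp add: b_def algebra_simps)
    have "inner ((z - u) - y) (u - v) = inner (u - v) b - (norm (u - v))\<^sup>2"
      unfolding e2 power2_norm_eq_inner inner_diff_left by (simp add: inner_commute inner_diff_right)
    then show "\<rho> * (norm (u - v))\<^sup>2 \<le> inner ((z - u) - y) (u - v)"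
      using m by (simp add: \<mu>_def algebra_simps)
  qed
qed



theorem theorem2p16:
  fixes A :: "'a::{real_inner, complete_space} \<Rightarrow> 'a set" and \<rho> :: real
  assumes "\<rho> > -1" and "comonotone \<rho> A"
  shows "gra A = {(resolvent A x, x - resolvent A x) | x. x \<in> ran_Id_plus A}
         \<and> (max_comonotone \<rho> A \<longleftrightarrow> ran_Id_plus A = UNIV)
         \<and> (max_comonotone \<rho> A \<longrightarrow> gra A = {(resolvent A x, x - resolvent A x) | x. True})"
proof -
  note r = assms(1) and c = assms(2)
  have P1: "gra A = {(resolvent A x, x - resolvent A x) | x. x \<in> ran_Id_plus A}"
  proof
    show "gra A \<subseteq> {(resolvent A x, x - resolvent A x) | x. x \<in> ran_Id_plus A}"
    proof
      fix pu assume "pu \<in> gra A"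
      then obtain p u where pu: "pu = (p, u)" "u \<in> A p" by (auto simp: gra_def)
      have "p + u \<in> ran_Id_plus A" using pu by (auto simp: ran_Id_plus_def)
      moreover have "resolvent A (p + u) = p" using resolv[OF r c pu(2)] .
      ultimately show "pu \<in> {(resolvent A x, x - resolvent A x) | x. x \<in> ran_Id_plus A}"
        using pu(1) by (intro CollectI exI[of _ "p + u"]) auto
    qed
    show "{(resolvent A x, x - resolvent A x) | x. x \<in> ran_Id_plus A} \<subseteq> gra A"
    proof
      fix pu assume "pu \<in> {(resolvent A x, x - resolvent A x) | x. x \<in> ran_Id_plus A}"
      then obtain x where x: "pu = (resolvent A x, x - resolvent A x)" "x \<in> ran_Id_plus A" by blast
      then obtain p u where pu: "x = p + u" "u \<in> A p" by (auto simp: ran_Id_plus_def)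
      have "resolvent A x = p" using resolv[OF r c pu(2)] pu(1) by simp
      then show "pu \<in> gra A" using x(1) pu by (simp add: gra_def)
    qed
  qed
  have P2: "max_comonotone \<rho> A \<longleftrightarrow> ran_Id_plus A = UNIV"
  proof
    assume m: "max_comonotone \<rho> A"
    show "ran_Id_plus A = UNIV"
    proof (intro set_eqI iffI)
      fix z :: 'a
      obtain u where u: "\<And>y v. v \<in> A y \<Longrightarrow> \<rho> * (norm (u - v))\<^sup>2 \<le> inner ((z - u) - y) (u - v)"
        using exist_u[OF r c, of z] by blast
      define B where "B = (\<lambda>p. A p \<union> (if p = z - u then {u} else {}))"
      have cB: "comonotone \<rho> B"
        unfolding comonotone_def
      proof (intro allI impI)
        fix x a y b assume a: "a \<in> B x" and b: "b \<in> B y"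
        show "\<rho> * (norm (a - b))\<^sup>2 \<le> inner (x - y) (a - b)"
        proof (cases "a \<in> A x")
          case aA: True
          show ?thesis
          proof (cases "b \<in> A y")
            case True then show ?thesis using aA c unfolding comonotone_def by blast
          next
            case False
            then have "b = u" "y = z - u" using b by (auto simp: B_def split: if_splits)
            moreover have "inner (x - (z - u)) (a - u) = inner ((z - u) - x) (u - a)"
              by (metis inner_minus_left inner_minus_right minus_diff_eq)
            ultimately show ?thesis using u[OF aA] by (simp add: norm_minus_commute)
          qed
        next
          case False
          then have au: "a = u" "x = z - u" using a by (auto simp: B_def split: if_splits)
          show ?thesis
          proof (cases "b \<in> A y")
            case True then show ?thesis using u[OF True] au by simp
          next
            case False
            then have "b = u" "y = z - u" using b by (auto simp: B_def split: if_splits)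
            then show ?thesis using au by simp
          qed
        qed
      qed
      have "gra A \<subseteq> gra B" by (auto simp: gra_def B_def)
      then have "gra B = gra A" using m cB unfolding max_comonotone_def by blast
      moreover have "(z - u, u) \<in> gra B" by (simp add: gra_def B_def)
      ultimately have "u \<in> A (z - u)" by (simp add: gra_def)
      then show "z \<in> ran_Id_plus A" unfolding ran_Id_plus_def by (intro CollectI exI[of _ "z - u"] exI[of _ u]) simp
    qed simp
  next
    assume ran: "ran_Id_plus A = UNIV"
    show "max_comonotone \<rho> A"
      unfolding max_comonotone_def
    proof (intro conjI allI impI)
      show "comonotone \<rho> A" by (rule c)
      fix B :: "'a \<Rightarrow> 'a set" assume cB: "comonotone \<rho> B" and sub: "gra A \<subseteq> gra B"
      show "gra B = gra A"
      proof
        show "gra B \<subseteq> gra A"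
        proof
          fix pu assume "pu \<in> gra B"
          then obtain p u where pu: "pu = (p, u)" "u \<in> B p" by (auto simp: gra_def)
          have "p + u \<in> ran_Id_plus A" using ran by simp
          then obtain p' u' where pu': "p + u = p' + u'" "u' \<in> A p'" by (auto simp: ran_Id_plus_def)
          then have "u' \<in> B p'" using sub by (auto simp: gra_def)
          from uniq[OF r cB pu(2) this pu'(1)] show "pu \<in> gra A" using pu pu' by (simp add: gra_def)
        qed
      qed (rule sub)
    qed
  qed
  have P3: "max_comonotone \<rho> A \<longrightarrow> gra A = {(resolvent A x, x - resolvent A x) | x. True}"
    using P1 P2 by simp
  show ?thesis using P1 P2 P3 by blast
qed

end
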